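(* Let $(a_k)_{k\in\mathbb N}$ be positive numbers with $\sum_ka_k=\infty$, and suppose there exist $C\ge1$, $\alpha\in(0,1)$ and $k_*$ such that $a_{k_2}\le Ca_{k_1}$ for all integers $k_*\le k_1\le k_2\le k_1+k_1^\alpha$. Let $b_k=\min\{a_k,k^{-\alpha}\}$. Then $b_{k_2}\le Cb_{k_1}$ for all integers $k_*\le k_1\le k_2\le k_1+k_1^\alpha$, and $\sum_kb_k=\infty$. *)

theory Defs
  imports Complex_Main
begin

end

theory Submission
  imports Defs
begin

theorem lemma4p3:
  fixes a b :: "nat \<Rightarrow> real" and C \<alpha> :: real and kstar :: nat
  assumes pos: "\<forall>k\<ge>1. a k > 0"
    and div: "\<not> summable a"
    and C: "C \<ge> 1"
    and alpha: "0 < \<alpha>" "\<alpha> < 1"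
    and kstar: "\<forall>k1 k2. 1 \<le> k1 \<and> kstar \<le> k1 \<and> k1 \<le> k2 \<and> real k2 \<le> real k1 + real k1 powr \<alpha>
                  \<longrightarrow> a k2 \<le> C * a k1"
    and b_def: "\<forall>k. b k = min (a k) (real k powr (-\<alpha>))"
  shows "(\<forall>k1 k2. 1 \<le> k1 \<and> kstar \<le> k1 \<and> k1 \<le> k2 \<and> real k2 \<le> real k1 + real k1 powr \<alpha>
                  \<longrightarrow> b k2 \<le> C * b k1) \<and> \<not> summable b"
proof
  show "\<forall>k1 k2. 1 \<le> k1 \<and> kstar \<le> k1 \<and> k1 \<le> k2 \<and> real k2 \<le> real k1 + real k1 powr \<alpha>
                  \<longrightarrow> b k2 \<le> C * b k1"
  proof (intro allI impI)
    fix k1 k2 :: nat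
    assume h: "1 \<le> k1 \<and> kstar \<le> k1 \<and> k1 \<le> k2 \<and> real k2 \<le> real k1 + real k1 powr \<alpha>"
    have "a k2 \<le> C * a k1" using kstar h by blast
    moreover have "real k2 powr (-\<alpha>) \<le> real k1 powr (-\<alpha>)"
      using h alpha by (intro powr_mono2') auto
    moreover have "real k1 powr (-\<alpha>) \<le> C * real k1 powr (-\<alpha>)"
      using C by (simp add: mult_le_cancel_right1)
    ultimately show "b k2 \<le> C * b k1" using b_def C
      by (simp add: min_mult_distrib_left min_def split: if_splits) linarith?
  qed
next
  show "\<not> summable b"
  proof
    assume sb: "summable b"
    show False
    proof (cases "\<exists>N. \<forall>k\<ge>N. a k \<le> real k powr (-\<alpha>)")
      case True
      then obtain N where N: "\<forall>k\<ge>N. a k \<le> real k powr (-\<alpha>)" by blast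
      have "eventually (\<lambda>k. b k = a k) sequentially"
        using N b_def unfolding eventually_sequentially by (metis min.absorb1)
      then have "summable a" using sb summable_cong by blast
      then show False using div by blast
    next
      case False
      define e where "e = 2 powr (-\<alpha>) / C"
      have e0: "e > 0" using C by (simp add: e_def)
      obtain N where N: "\<forall>m\<ge>N. \<forall>n. norm (sum b {m..<n}) < e"
        using sb e0 unfolding summable_Cauchy by blast
      obtain k1 where k1: "k1 \<ge> 2*(N+kstar+1)" "a k1 > real k1 powr (-\<alpha>)"
        using False by (meson not_le)
      define x where "x = real k1 / 2"
      have x1: "x \<ge> 1" and xN: "x \<ge> N" and xk: "x \<ge> kstar" using k1 by (auto simp: x_def)
      define L where "L = nat \<lfloor>x powr \<alpha>\<rfloor>"
      have Lle: "real L \<le> x powr \<alpha>" unfolding L_def using x1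
        by (simp add: of_nat_nat)
      have Lge: "real L + 1 \<ge> x powr \<alpha>" unfolding L_def using x1
        by (simp add: of_nat_nat)
      have "x powr \<alpha> \<le> x powr 1" using x1 alpha by (intro powr_mono) auto
      then have xa: "x powr \<alpha> \<le> x" using x1 by simp
      define lo where "lo = k1 - L"
      have lo: "real lo \<ge> x" using Lle xa x1 unfolding lo_def x_def
        by (simp add: of_nat_diff) 
      have lok: "lo \<le> k1" unfolding lo_def by simp
      have Lk: "L \<le> k1" using Lle xa x1 unfolding x_def by linarith
      have "\<forall>k\<in>{lo..<Suc k1}. b k \<ge> real k1 powr (-\<alpha>) / C"
      proof
        fix k assume k: "k \<in> {lo..<Suc k1}"
        have kx: "real k \<ge> x" using k lo by auto
        have kk1: "k \<le> k1" using k by auto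
        have k1pos: "real k1 > 0" using x1 unfolding x_def by simp
        have "real k1 \<le> real k + real k powr \<alpha>"
        proof -
          have "x powr \<alpha> \<le> real k powr \<alpha>" using kx x1 alpha by (intro powr_mono2) auto
          moreover have "real k1 \<le> real k + real L" using k unfolding lo_def by auto
          ultimately show ?thesis using Lle by linarith
        qed
        then have "a k1 \<le> C * a k" using kstar kx x1 xk kk1 by auto
        then have A: "a k \<ge> real k1 powr (-\<alpha>) / C" using k1(2) C
          by (simp add: divide_le_eq mult.commute)
        have "real k1 powr (-\<alpha>) \<le> real k powr (-\<alpha>)"
          using kk1 kx x1 alpha by (intro powr_mono2') auto
        moreover have "real k1 powr (-\<alpha>) / C \<le> real k1 powr (-\<alpha>)"
          using C by (simp add: divide_le_eq mult_le_cancel_left1)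
        ultimately show "b k \<ge> real k1 powr (-\<alpha>) / C" using A b_def by simp
      qed
      then have S: "sum b {lo..<Suc k1} \<ge> (\<Sum>k\<in>{lo..<Suc k1}. real k1 powr (-\<alpha>) / C)"
        by (intro sum_mono) auto
      have "e = x powr \<alpha> * (real k1 powr (-\<alpha>) / C)"
        unfolding e_def x_def using x1 unfolding x_def
        by (simp add: powr_divide powr_minus divide_simps)
      also have "\<dots> \<le> (real L + 1) * (real k1 powr (-\<alpha>) / C)"
        using Lge C by (intro mult_right_mono) auto
      also have "\<dots> = (\<Sum>k\<in>{lo..<Suc k1}. real k1 powr (-\<alpha>) / C)"
        using Lk unfolding lo_def by (simp add: of_nat_diff)
      also have "\<dots> \<le> sum b {lo..<Suc k1}" by (rule S)
      finally have "sum b {lo..<Suc k1} \<ge> e" .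
      moreover have "lo \<ge> N" using lo xN by linarith
      then have "norm (sum b {lo..<Suc k1}) < e" using N by blast
      ultimately show False by simp
    qed
  qed
qed

end
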